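(* Let $P$ be a program which is safe w.r.t. a mode $M$ and satisfies $M$, and whose non-unit clauses are pairwise mutually exclusive w.r.t. $M$. Then for any non-basic atom $A_0$ which satisfies $M$ and any basic goal $G_0$, there exists at most one goal $(A_1,G_1)$ such that $A_1$ is a non-basic atom and $(A_0,G_0)\Rightarrow_P(A_1,G_1)$.
   Context: Syntax. Predicate symbols $\mathit{true}$, $=$, $\neq$ are basic, all others non-basic; the set of function symbols is infinite. Basic atoms: $\mathit{true}$, $t_1=t_2$, $t_1\neq t_2$ (disequation); non-basic atoms $p(t_1,\dots,t_m)$, $p$ non-basic. A goal is a conjunction of atoms ("," associative, neutral element $\mathit{true}$); it is basic if all its atoms are basic. A clause $C$ is $A\leftarrow G$ with non-basic head $hd(C)$ and body $bd(C)$; it is a unit clause iff its body is basic. A program is a set of clauses. All mgu's are relevant and idempotent. A variable $X$ is a local variable of goal $G$ in clause $H\leftarrow G_1,G,G_2$ iff $X\in vars(G)-vars(H,G_1,G_2)$. Operational semantics (program $P$): (1) $(t_1=t_2,G)\longmapsto_P G\vartheta$ if $t_1,t_2$ unify with mgu $\vartheta$; (2) $(t_1\neq t_2,G)\longmapsto_P G$ if not unifiable; (3) $(A,G)\longmapsto_P(bd(C),G)\vartheta$ if $A$ is non-basic, $C$ a renamed apart clause of $P$ and $\vartheta$ an mgu of $A$ and $hd(C)$ (a step using $C$). $\longmapsto^*_P$ is the reflexive-transitive closure. For $C\in P$ and $A_0$ non-basic, $(A_0,G_0)\Rightarrow_C(A_n,G_n)$ iff there is a derivation $(A_0,G_0)\longmapsto_P\cdots\longmapsto_P(A_n,G_n)$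 with $n>0$ whose first step uses $C$, with $A_i$ basic for $0<i<n$, and either $A_n$ non-basic or $(A_n,G_n)=\mathit{true}$. $(A_0,G_0)\Rightarrow_P G'$ iff $(A_0,G_0)\Rightarrow_C G'$ for some $C\in P$. Modes. A mode for non-basic $p$ of arity $h$ is $p(m_1,\dots,m_h)$, $m_i\in\{+,?\}$; $t_i$ is an input argument iff $m_i=+$; variables in input arguments are input variables. A mode for a program contains exactly one mode per non-basic predicate occurring in it. An atom satisfies $M$ iff $M$ has a mode for its predicate and its input arguments are ground. $P$ satisfies $M$ iff for every non-basic $A_0$ satisfying $M$ and every non-basic $A$ and goal $G$ with $A_0\longmapsto^*_P(A,G)$, $A$ satisfies $M$. A clause $C$ is safe w.r.t. $M$ iff every variable of every disequation in $bd(C)$ is an input variable of $hd(C)$ or a local variable of that disequation in $C$; a program is safe iff all its clauses are. Satisfiability. A ground basic goal holds iff each atom is $\mathit{true}$, $t=t$, or $t_1\neq t_2$ with $t_1,t_2$ distinct ground terms. A conjunction $D$ of disequations is satisfiable w.r.t. a set $V$ of variables iff there is a ground substitution $\sigma$ with domain $V$ such that every ground instance of $D\sigma$ holds. Guard. $grd(C)=bd(C)$ if all atoms of $bd(C)$ are disequations; otherwise it is the conjunction of disequations of $bd(C)$ to the left of the leftmost atom that is not a disequation. Mutual exclusion. For renamed apart clauses $C_1: p(t_1,u_1)\leftarrow G_1$ and $C_2: p(t_2,u_2)\leftarrow G_2$, where $t_1,t_2$ are the tuples of input arguments of $p$ under $M$ and $u_1,u_2$ the remaining arguments, $C_1,C_2$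 are mutually exclusive w.r.t. $M$ iff either $t_1,t_2$ are not unifiable, or they are unifiable via an mgu $\vartheta$ and $(grd(C_1),grd(C_2))\vartheta$ is not satisfiable w.r.t. $vars(t_1,t_2)$ (empty tuples unify via the identity). *)

theory Defs
  imports Main
begin

datatype ('f,'v) trm = Var 'v | Fn 'f "('f,'v) trm list"

fun vars_trm :: "('f,'v) trm \<Rightarrow> 'v set" where
  "vars_trm (Var x) = {x}"
| "vars_trm (Fn f ts) = (\<Union>t\<in>set ts. vars_trm t)"

type_synonym ('f,'v) subst = "'v \<Rightarrow> ('f,'v) trm"

fun subst_trm :: "('f,'v) subst \<Rightarrow> ('f,'v) trm \<Rightarrow> ('f,'v) trm" where
  "subst_trm \<sigma> (Var x) = \<sigma> x"
| "subst_trm \<sigma> (Fn f ts) = Fn f (map (subst_trm \<sigma>) ts)"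

definition ground_trm :: "('f,'v) trm \<Rightarrow> bool" where
  "ground_trm t \<longleftrightarrow> vars_trm t = {}"

definition vars_trms :: "('f,'v) trm list \<Rightarrow> 'v set" where
  "vars_trms ts = (\<Union>t\<in>set ts. vars_trm t)"

text \<open>Atoms. The basic atom true is the neutral element of conjunction and is
  represented by the empty goal (goals are lists of the remaining atoms).\<close>
datatype ('p,'f,'v) atm =
    Eq "('f,'v) trm" "('f,'v) trm"
  | Neq "('f,'v) trm" "('f,'v) trm"
  | Pred 'p "('f,'v) trm list"

type_synonym ('p,'f,'v) goal = "('p,'f,'v) atm list"

fun basic_atm :: "('p,'f,'v) atm \<Rightarrow> bool" where
  "basic_atm (Eq s t) = True"
| "basic_atm (Neq s t) = True"
| "basic_atm (Pred p ts) = False"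

fun is_neq :: "('p,'f,'v) atm \<Rightarrow> bool" where
  "is_neq (Neq s t) = True"
| "is_neq _ = False"

fun vars_atm :: "('p,'f,'v) atm \<Rightarrow> 'v set" where
  "vars_atm (Eq s t) = vars_trm s \<union> vars_trm t"
| "vars_atm (Neq s t) = vars_trm s \<union> vars_trm t"
| "vars_atm (Pred p ts) = vars_trms ts"

fun subst_atm :: "('f,'v) subst \<Rightarrow> ('p,'f,'v) atm \<Rightarrow> ('p,'f,'v) atm" where
  "subst_atm \<sigma> (Eq s t) = Eq (subst_trm \<sigma> s) (subst_trm \<sigma> t)"
| "subst_atm \<sigma> (Neq s t) = Neq (subst_trm \<sigma> s) (subst_trm \<sigma> t)"
| "subst_atm \<sigma> (Pred p ts) = Pred p (map (subst_trm \<sigma>) ts)"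

definition vars_goal :: "('p,'f,'v) goal \<Rightarrow> 'v set" where
  "vars_goal G = (\<Union>A\<in>set G. vars_atm A)"

definition subst_goal :: "('f,'v) subst \<Rightarrow> ('p,'f,'v) goal \<Rightarrow> ('p,'f,'v) goal" where
  "subst_goal \<sigma> G = map (subst_atm \<sigma>) G"

definition basic_goal :: "('p,'f,'v) goal \<Rightarrow> bool" where
  "basic_goal G \<longleftrightarrow> (\<forall>A\<in>set G. basic_atm A)"

definition ground_goal :: "('p,'f,'v) goal \<Rightarrow> bool" where
  "ground_goal G \<longleftrightarrow> vars_goal G = {}"

datatype ('p,'f,'v) clause = Clause 'p "('f,'v) trm list" "('p,'f,'v) goal"

fun cl_head :: "('p,'f,'v) clause \<Rightarrow> ('p,'f,'v) atm" where
  "cl_head (Clause p ts B) = Pred p ts"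

fun cl_body :: "('p,'f,'v) clause \<Rightarrow> ('p,'f,'v) goal" where
  "cl_body (Clause p ts B) = B"

definition vars_cl :: "('p,'f,'v) clause \<Rightarrow> 'v set" where
  "vars_cl C = vars_atm (cl_head C) \<union> vars_goal (cl_body C)"

fun subst_cl :: "('f,'v) subst \<Rightarrow> ('p,'f,'v) clause \<Rightarrow> ('p,'f,'v) clause" where
  "subst_cl \<sigma> (Clause p ts B) = Clause p (map (subst_trm \<sigma>) ts) (subst_goal \<sigma> B)"

definition unit_clause :: "('p,'f,'v) clause \<Rightarrow> bool" where
  "unit_clause C \<longleftrightarrow> basic_goal (cl_body C)"

definition subst_dom :: "('f,'v) subst \<Rightarrow> 'v set" where
  "subst_dom \<sigma> = {x. \<sigma> x \<noteq> Var x}"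

definition subst_range_vars :: "('f,'v) subst \<Rightarrow> 'v set" where
  "subst_range_vars \<sigma> = (\<Union>x\<in>subst_dom \<sigma>. vars_trm (\<sigma> x))"

definition unifiable_list :: "('f,'v) trm list \<Rightarrow> ('f,'v) trm list \<Rightarrow> bool" where
  "unifiable_list ss ts \<longleftrightarrow> length ss = length ts \<and>
     (\<exists>\<sigma>. map (subst_trm \<sigma>) ss = map (subst_trm \<sigma>) ts)"

definition is_mgu_list :: "('f,'v) subst \<Rightarrow> ('f,'v) trm list \<Rightarrow> ('f,'v) trm list \<Rightarrow> bool" where
  "is_mgu_list \<theta> ss ts \<longleftrightarrow> length ss = length ts
     \<and> map (subst_trm \<theta>) ss = map (subst_trm \<theta>) ts
     \<and> (\<forall>\<sigma>. map (subst_trm \<sigma>) ss = map (subst_trm \<sigma>) ts \<longrightarrow>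
            (\<exists>\<tau>. \<forall>x. \<sigma> x = subst_trm \<tau> (\<theta> x)))
     \<and> (\<forall>x. subst_trm \<theta> (\<theta> x) = \<theta> x)
     \<and> subst_dom \<theta> \<union> subst_range_vars \<theta> \<subseteq> vars_trms ss \<union> vars_trms ts"

fun is_mgu_atm :: "('f,'v) subst \<Rightarrow> ('p,'f,'v) atm \<Rightarrow> ('p,'f,'v) atm \<Rightarrow> bool" where
  "is_mgu_atm \<theta> (Pred p ts) (Pred q us) \<longleftrightarrow> p = q \<and> is_mgu_list \<theta> ts us"
| "is_mgu_atm \<theta> _ _ \<longleftrightarrow> False"

definition variant_cl :: "('p,'f,'v) clause \<Rightarrow> ('p,'f,'v) clause \<Rightarrow> bool" where
  "variant_cl C' C \<longleftrightarrow> (\<exists>\<pi>. bij \<pi> \<and> C' = subst_cl (\<lambda>x. Var (\<pi> x)) C)"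

definition variant_goal :: "('p,'f,'v) goal \<Rightarrow> ('p,'f,'v) goal \<Rightarrow> bool" where
  "variant_goal G' G \<longleftrightarrow> (\<exists>\<pi>. bij \<pi> \<and> G' = subst_goal (\<lambda>x. Var (\<pi> x)) G)"

definition basic_step :: "('p,'f,'v) goal \<Rightarrow> ('p,'f,'v) goal \<Rightarrow> bool" where
  "basic_step g g' \<longleftrightarrow>
     (\<exists>t1 t2 G \<theta>. g = Eq t1 t2 # G \<and> is_mgu_list \<theta> [t1] [t2] \<and> g' = subst_goal \<theta> G)
   \<or> (\<exists>t1 t2. g = Neq t1 t2 # g' \<and> \<not> unifiable_list [t1] [t2])"

definition clause_step :: "('p,'f,'v) clause \<Rightarrow> ('p,'f,'v) goal \<Rightarrow> ('p,'f,'v) goal \<Rightarrow> bool" where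
  "clause_step C g g' \<longleftrightarrow>
     (\<exists>A G C' \<theta>. g = A # G \<and> \<not> basic_atm A \<and> variant_cl C' C
        \<and> vars_cl C' \<inter> vars_goal g = {}
        \<and> is_mgu_atm \<theta> A (cl_head C')
        \<and> g' = subst_goal \<theta> (cl_body C' @ G))"

definition step :: "('p,'f,'v) clause set \<Rightarrow> ('p,'f,'v) goal \<Rightarrow> ('p,'f,'v) goal \<Rightarrow> bool" where
  "step P g g' \<longleftrightarrow> basic_step g g' \<or> (\<exists>C\<in>P. clause_step C g g')"

definition steps :: "('p,'f,'v) clause set \<Rightarrow> ('p,'f,'v) goal \<Rightarrow> ('p,'f,'v) goal \<Rightarrow> bool" where
  "steps P = (step P)\<^sup>*\<^sup>*"

definition derives_C :: "('p,'f,'v) clause set \<Rightarrow> ('p,'f,'v) clause \<Rightarrow> ('p,'f,'v) goal \<Rightarrow> ('p,'f,'v) goal \<Rightarrow> bool" where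
  "derives_C P C g g' \<longleftrightarrow> C \<in> P \<and> g \<noteq> [] \<and> \<not> basic_atm (hd g) \<and>
     (\<exists>n f. n > 0 \<and> f 0 = g \<and> f n = g'
        \<and> (\<forall>i<n. step P (f i) (f (Suc i)))
        \<and> clause_step C (f 0) (f 1)
        \<and> (\<forall>i. 0 < i \<and> i < n \<longrightarrow> f i \<noteq> [] \<and> basic_atm (hd (f i)))
        \<and> (g' = [] \<or> \<not> basic_atm (hd g')))"

definition derives :: "('p,'f,'v) clause set \<Rightarrow> ('p,'f,'v) goal \<Rightarrow> ('p,'f,'v) goal \<Rightarrow> bool" where
  "derives P g g' \<longleftrightarrow> (\<exists>C\<in>P. derives_C P C g g')"

text \<open>A mode assigns to a predicate symbol p of arity h (the pair (p,h)) a list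
  of h flags; True means '+' (input), False means '?'.\<close>
type_synonym 'p mode = "'p \<times> nat \<Rightarrow> bool list option"

definition has_mode :: "'p mode \<Rightarrow> 'p \<Rightarrow> ('f,'v) trm list \<Rightarrow> bool" where
  "has_mode M p ts \<longleftrightarrow> (\<exists>ms. M (p, length ts) = Some ms \<and> length ms = length ts)"

definition input_args :: "'p mode \<Rightarrow> 'p \<Rightarrow> ('f,'v) trm list \<Rightarrow> ('f,'v) trm list" where
  "input_args M p ts = map snd (filter fst (zip (the (M (p, length ts))) ts))"

fun atm_sat :: "'p mode \<Rightarrow> ('p,'f,'v) atm \<Rightarrow> bool" where
  "atm_sat M (Pred p ts) \<longleftrightarrow> has_mode M p ts \<and> (\<forall>t\<in>set (input_args M p ts). ground_trm t)"
| "atm_sat M _ \<longleftrightarrow> False"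

definition mode_for :: "'p mode \<Rightarrow> ('p,'f,'v) clause set \<Rightarrow> bool" where
  "mode_for M P \<longleftrightarrow> (\<forall>C\<in>P. \<forall>A\<in>insert (cl_head C) (set (cl_body C)).
      \<forall>p ts. A = Pred p ts \<longrightarrow> has_mode M p ts)"

definition prog_satisfies :: "'p mode \<Rightarrow> ('p,'f,'v) clause set \<Rightarrow> bool" where
  "prog_satisfies M P \<longleftrightarrow> (\<forall>A0 A G. \<not> basic_atm A0 \<longrightarrow> atm_sat M A0 \<longrightarrow>
      steps P [A0] (A # G) \<longrightarrow> \<not> basic_atm A \<longrightarrow> atm_sat M A)"

fun head_input_vars :: "'p mode \<Rightarrow> ('p,'f,'v) clause \<Rightarrow> 'v set" where
  "head_input_vars M (Clause p ts B) = vars_trms (input_args M p ts)"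

definition local_var :: "('p,'f,'v) clause \<Rightarrow> nat \<Rightarrow> 'v \<Rightarrow> bool" where
  "local_var C i x \<longleftrightarrow> x \<in> vars_atm (cl_body C ! i) \<and> x \<notin> vars_atm (cl_head C)
     \<and> (\<forall>j<length (cl_body C). j \<noteq> i \<longrightarrow> x \<notin> vars_atm (cl_body C ! j))"

definition safe_clause :: "'p mode \<Rightarrow> ('p,'f,'v) clause \<Rightarrow> bool" where
  "safe_clause M C \<longleftrightarrow> (\<forall>i<length (cl_body C). \<forall>t1 t2. cl_body C ! i = Neq t1 t2 \<longrightarrow>
      (\<forall>x\<in>vars_trm t1 \<union> vars_trm t2. x \<in> head_input_vars M C \<or> local_var C i x))"

definition safe_prog :: "'p mode \<Rightarrow> ('p,'f,'v) clause set \<Rightarrow> bool" where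
  "safe_prog M P \<longleftrightarrow> (\<forall>C\<in>P. safe_clause M C)"

fun holds_atm :: "('p,'f,'v) atm \<Rightarrow> bool" where
  "holds_atm (Eq s t) \<longleftrightarrow> s = t"
| "holds_atm (Neq s t) \<longleftrightarrow> s \<noteq> t"
| "holds_atm (Pred p ts) \<longleftrightarrow> False"

definition holds_goal :: "('p,'f,'v) goal \<Rightarrow> bool" where
  "holds_goal G \<longleftrightarrow> (\<forall>A\<in>set G. holds_atm A)"

definition satisfiable_wrt :: "('p,'f,'v) goal \<Rightarrow> 'v set \<Rightarrow> bool" where
  "satisfiable_wrt D V \<longleftrightarrow> (\<exists>\<sigma>. (\<forall>x\<in>V. ground_trm (\<sigma> x)) \<and> (\<forall>x. x \<notin> V \<longrightarrow> \<sigma> x = Var x)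
     \<and> (\<forall>\<tau>. ground_goal (subst_goal \<tau> (subst_goal \<sigma> D)) \<longrightarrow>
            holds_goal (subst_goal \<tau> (subst_goal \<sigma> D))))"

definition guard :: "('p,'f,'v) clause \<Rightarrow> ('p,'f,'v) goal" where
  "guard C = takeWhile is_neq (cl_body C)"

fun mutex_apart :: "'p mode \<Rightarrow> ('p,'f,'v) clause \<Rightarrow> ('p,'f,'v) clause \<Rightarrow> bool" where
  "mutex_apart M (Clause p1 ts1 B1) (Clause p2 ts2 B2) \<longleftrightarrow>
     ((p1, length ts1) = (p2, length ts2) \<longrightarrow>
       (let t1 = input_args M p1 ts1; t2 = input_args M p2 ts2 in
         \<not> unifiable_list t1 t2 \<or>
         (\<exists>\<theta>. is_mgu_list \<theta> t1 t2 \<and>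
              \<not> satisfiable_wrt (subst_goal \<theta> (guard (Clause p1 ts1 B1) @ guard (Clause p2 ts2 B2)))
                                (vars_trms t1 \<union> vars_trms t2))))"

definition mutex :: "'p mode \<Rightarrow> ('p,'f,'v) clause \<Rightarrow> ('p,'f,'v) clause \<Rightarrow> bool" where
  "mutex M C1 C2 \<longleftrightarrow> (\<forall>C1' C2'. variant_cl C1' C1 \<longrightarrow> variant_cl C2' C2 \<longrightarrow>
      vars_cl C1' \<inter> vars_cl C2' = {} \<longrightarrow> mutex_apart M C1' C2')"

end

theory Submission
  imports Defs
begin


definition comp_s :: "('f,'v) subst \<Rightarrow> ('f,'v) subst \<Rightarrow> ('f,'v) subst" where
  "comp_s \<sigma> \<tau> = (\<lambda>x. subst_trm \<sigma> (\<tau> x))"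

lemma subst_trm_comp: "subst_trm \<sigma> (subst_trm \<tau> t) = subst_trm (comp_s \<sigma> \<tau>) t"
  by (induction t) (auto simp: comp_s_def)

lemma subst_trm_cong: "(\<And>x. x \<in> vars_trm t \<Longrightarrow> \<sigma> x = \<tau> x) \<Longrightarrow> subst_trm \<sigma> t = subst_trm \<tau> t"
  by (induction t) auto

lemma subst_trm_Var[simp]: "subst_trm Var t = t"
  by (induction t) (auto simp: map_idI)

lemma vars_subst_trm: "vars_trm (subst_trm \<sigma> t) = (\<Union>x\<in>vars_trm t. vars_trm (\<sigma> x))"
  by (induction t) auto

lemma ground_subst: "ground_trm t \<Longrightarrow> subst_trm \<sigma> t = t"
  using subst_trm_cong[of t \<sigma> Var] by (auto simp: ground_trm_def)

lemma ground_subst_var: "ground_trm (subst_trm \<sigma> t) \<Longrightarrow> x \<in> vars_trm t \<Longrightarrow> ground_trm (\<sigma> x)"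
  by (auto simp: ground_trm_def vars_subst_trm)

lemma subst_fix_var: "subst_trm \<sigma> t = t \<Longrightarrow> x \<in> vars_trm t \<Longrightarrow> \<sigma> x = Var x"
proof (induction t)
  case (Var y) then show ?case by simp
next
  case (Fn f ts)
  then obtain t where t: "t \<in> set ts" "x \<in> vars_trm t" by auto
  from Fn.prems(1) have "map (subst_trm \<sigma>) ts = map id ts" by simp
  then have "subst_trm \<sigma> t = t" using t(1) by (metis id_apply map_eq_conv)
  then show ?case using Fn.IH t by blast
qed

lemma subst_atm_comp: "subst_atm \<sigma> (subst_atm \<tau> A) = subst_atm (comp_s \<sigma> \<tau>) A"
  by (cases A) (auto simp: subst_trm_comp)

lemma vars_trms_map: "vars_trms (map (subst_trm \<sigma>) ts) = (\<Union>x\<in>vars_trms ts. vars_trm (\<sigma> x))"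
  by (auto simp: vars_trms_def vars_subst_trm)

lemma vars_subst_atm: "vars_atm (subst_atm \<sigma> A) = (\<Union>x\<in>vars_atm A. vars_trm (\<sigma> x))"
  by (cases A) (auto simp: vars_subst_trm vars_trms_map)

lemma subst_atm_cong: "(\<And>x. x \<in> vars_atm A \<Longrightarrow> \<sigma> x = \<tau> x) \<Longrightarrow> subst_atm \<sigma> A = subst_atm \<tau> A"
  by (cases A) (auto simp: vars_trms_def intro: subst_trm_cong)

lemma subst_atm_Var[simp]: "subst_atm Var A = A"
  by (cases A) (auto simp: map_idI)

lemma basic_subst_atm[simp]: "basic_atm (subst_atm \<sigma> A) = basic_atm A"
  by (cases A) auto

lemma is_neq_subst_atm[simp]: "is_neq (subst_atm \<sigma> A) = is_neq A"
  by (cases A) auto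

lemma subst_goal_comp: "subst_goal \<sigma> (subst_goal \<tau> G) = subst_goal (comp_s \<sigma> \<tau>) G"
  by (auto simp: subst_goal_def subst_atm_comp)

lemma subst_goal_cong: "(\<And>x. x \<in> vars_goal G \<Longrightarrow> \<sigma> x = \<tau> x) \<Longrightarrow> subst_goal \<sigma> G = subst_goal \<tau> G"
  by (auto simp: subst_goal_def vars_goal_def intro: subst_atm_cong)

lemma subst_goal_Var[simp]: "subst_goal Var G = G"
  by (auto simp: subst_goal_def map_idI)

lemma subst_goal_simps[simp]: "subst_goal \<sigma> [] = []" "subst_goal \<sigma> (A # G) = subst_atm \<sigma> A # subst_goal \<sigma> G"
  "subst_goal \<sigma> (G @ H) = subst_goal \<sigma> G @ subst_goal \<sigma> H"
  by (auto simp: subst_goal_def)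

lemma vars_goal_simps[simp]: "vars_goal [] = {}" "vars_goal (A # G) = vars_atm A \<union> vars_goal G"
  "vars_goal (G @ H) = vars_goal G \<union> vars_goal H"
  by (auto simp: vars_goal_def)

lemma vars_subst_goal: "vars_goal (subst_goal \<sigma> G) = (\<Union>x\<in>vars_goal G. vars_trm (\<sigma> x))"
  by (induction G) (auto simp: vars_subst_atm)

lemma comp_s_apply: "comp_s \<sigma> \<tau> x = subst_trm \<sigma> (\<tau> x)" by (simp add: comp_s_def)



lemma finite_vars_trm[simp]: "finite (vars_trm t)"
  by (induction t) auto
lemma finite_vars_trms[simp]: "finite (vars_trms ts)"
  by (auto simp: vars_trms_def)
lemma finite_vars_atm[simp]: "finite (vars_atm A)"
  by (cases A) auto
lemma finite_vars_goal[simp]: "finite (vars_goal G)"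
  by (auto simp: vars_goal_def)
lemma finite_vars_cl[simp]: "finite (vars_cl C)"
  by (auto simp: vars_cl_def)

lemma subst_goal_fix_var: "subst_goal \<sigma> G = G \<Longrightarrow> x \<in> vars_goal G \<Longrightarrow> \<sigma> x = Var x"
proof (induction G)
  case Nil then show ?case by simp
next
  case (Cons A G)
  show ?case
  proof (cases "x \<in> vars_atm A")
    case True
    have sa: "subst_atm \<sigma> A = A" using Cons.prems by simp
    have mm: "\<And>ts t. map (subst_trm \<sigma>) ts = ts \<Longrightarrow> t \<in> set ts \<Longrightarrow> subst_trm \<sigma> t = t"
      by (metis id_apply map_eq_conv list.map_id)
    show ?thesis
    proof (cases A)
      case (Eq s t) then show ?thesis using sa True subst_fix_var by auto
    next
      case (Neq s t) then show ?thesis using sa True subst_fix_var by auto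
    next
      case (Pred p ts)
      then obtain t where "t \<in> set ts" "x \<in> vars_trm t" using True by (auto simp: vars_trms_def)
      then show ?thesis using mm[of ts t] sa Pred subst_fix_var by auto
    qed
  next
    case False then show ?thesis using Cons by auto
  qed
qed

definition sw :: "'a \<Rightarrow> 'a \<Rightarrow> 'a \<Rightarrow> 'a" where
  "sw a b x = (if x = a then b else if x = b then a else x)"

lemma bij_sw: "bij (sw a b)"
proof -
  have "sw a b \<circ> sw a b = id" by (auto simp: sw_def fun_eq_iff)
  then show ?thesis using o_bij by blast
qed

lemma ext_perm:
  assumes "finite S" "inj_on (f :: 'a \<Rightarrow> 'a) S"
  shows "\<exists>\<pi>. bij \<pi> \<and> (\<forall>x\<in>S. \<pi> x = f x)"
  using assms
proof (induction S rule: finite_induct)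
  case empty
  have "bij (id :: 'a \<Rightarrow> 'a)" by simp
  then show ?case by blast
next
  case (insert x S)
  have "inj_on f S" using insert.prems inj_on_insert by blast
  then obtain \<pi> where \<pi>: "bij \<pi>" "\<forall>y\<in>S. \<pi> y = f y" using insert.IH by blast
  have fx: "f x \<notin> f ` S" using insert.prems insert.hyps(2) inj_on_insert by blast
  define \<pi>' where "\<pi>' = sw (f x) (\<pi> x) \<circ> \<pi>"
  have "bij \<pi>'" unfolding \<pi>'_def by (rule bij_comp[OF \<pi>(1) bij_sw])
  moreover have "\<forall>y\<in>insert x S. \<pi>' y = f y"
  proof
    fix y assume y: "y \<in> insert x S"
    show "\<pi>' y = f y"
    proof (cases "y = x")
      case True then show ?thesis by (simp add: sw_def \<pi>'_def)
    next
      case False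
      then have yS: "y \<in> S" using y by blast
      have "inj \<pi>" using \<pi>(1) bij_is_inj by blast
      then have ne: "\<pi> y \<noteq> \<pi> x" using False by (auto dest: injD)
      have "\<pi> y = f y" using \<pi>(2) yS by blast
      moreover have "f y \<noteq> f x" by (metis fx yS imageI)
      ultimately show ?thesis using ne by (simp add: sw_def \<pi>'_def)
    qed
  qed
  ultimately show ?case by blast
qed

lemma mutual_inst_variant:
  assumes "G' = subst_goal \<tau> G" "G = subst_goal \<tau>' G'"
  shows "variant_goal G' G"
proof -
  have "subst_goal (comp_s \<tau>' \<tau>) G = subst_goal \<tau>' (subst_goal \<tau> G)" by (simp add: subst_goal_comp)
  also have "\<dots> = G" by (simp only: assms(1)[symmetric] assms(2)[symmetric])
  finally have hfix: "subst_goal (comp_s \<tau>' \<tau>) G = G" .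
  define f where "f x = (case \<tau> x of Var y \<Rightarrow> y | _ \<Rightarrow> x)" for x
  have tv: "\<tau> x = Var (f x) \<and> \<tau>' (f x) = Var x" if "x \<in> vars_goal G" for x
  proof -
    have "subst_trm \<tau>' (\<tau> x) = Var x" using subst_goal_fix_var[OF hfix that] by (simp add: comp_s_def)
    then show ?thesis
    proof (cases "\<tau> x")
      case (Var y) then show ?thesis using \<open>subst_trm \<tau>' (\<tau> x) = Var x\<close> by (simp add: f_def)
    next
      case (Fn g ts) then show ?thesis using \<open>subst_trm \<tau>' (\<tau> x) = Var x\<close> by simp
    qed
  qed
  have "inj_on f (vars_goal G)"
  proof (rule inj_onI)
    fix x y assume xy: "x \<in> vars_goal G" "y \<in> vars_goal G" "f x = f y"
    have "Var x = \<tau>' (f x)" using tv[OF xy(1)] by (elim conjE) (rule sym)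
    also have "\<dots> = \<tau>' (f y)" using xy(3) by (rule arg_cong)
    also have "\<dots> = Var y" using tv[OF xy(2)] by (rule conjunct2)
    finally show "x = y" by simp
  qed
  moreover have "finite (vars_goal G)" by simp
  ultimately obtain \<pi> where \<pi>: "bij \<pi>" "\<forall>x\<in>vars_goal G. \<pi> x = f x"
    using ext_perm by blast
  have "G' = subst_goal (\<lambda>x. Var (\<pi> x)) G"
    unfolding assms(1)
  proof (rule subst_goal_cong)
    fix x assume x: "x \<in> vars_goal G"
    show "\<tau> x = Var (\<pi> x)" using tv[OF x] \<pi>(2) x by simp
  qed
  then show ?thesis using \<pi>(1) unfolding variant_goal_def by blast
qed

lemma subst_cl_comp: "subst_cl \<sigma> (subst_cl \<tau> C) = subst_cl (comp_s \<sigma> \<tau>) C"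
  by (cases C) (auto simp: subst_trm_comp subst_goal_comp)

lemma cl_head_subst[simp]: "cl_head (subst_cl \<sigma> C) = subst_atm \<sigma> (cl_head C)"
  by (cases C) auto
lemma cl_body_subst[simp]: "cl_body (subst_cl \<sigma> C) = subst_goal \<sigma> (cl_body C)"
  by (cases C) auto

lemma vars_cl_subst: "vars_cl (subst_cl \<sigma> C) = (\<Union>x\<in>vars_cl C. vars_trm (\<sigma> x))"
  by (auto simp: vars_cl_def vars_subst_atm vars_subst_goal)

lemma subst_cl_cong: "(\<And>x. x \<in> vars_cl C \<Longrightarrow> \<sigma> x = \<tau> x) \<Longrightarrow> subst_cl \<sigma> C = subst_cl \<tau> C"
proof (cases C)
  case (Clause p ts B)
  assume a: "\<And>x. x \<in> vars_cl C \<Longrightarrow> \<sigma> x = \<tau> x"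
  have "subst_atm \<sigma> (cl_head C) = subst_atm \<tau> (cl_head C)"
    by (rule subst_atm_cong) (auto simp: vars_cl_def a)
  moreover have "subst_goal \<sigma> (cl_body C) = subst_goal \<tau> (cl_body C)"
    by (rule subst_goal_cong) (auto simp: vars_cl_def a)
  ultimately show ?thesis using Clause by simp
qed

lemma input_args_map: "input_args M p (map f ts) = map f (input_args M p ts)"
proof -
  have "map snd (filter fst (zip ms (map f ts))) = map f (map snd (filter fst (zip ms ts)))" for ms :: "bool list"
    by (induction ms ts rule: list_induct2') auto
  then show ?thesis by (simp add: input_args_def)
qed



lemma map_subst_comp: "map (subst_trm \<sigma>) (map (subst_trm \<tau>) ts) = map (subst_trm (comp_s \<sigma> \<tau>)) ts"
  by (simp add: subst_trm_comp)

lemma mgu_factor: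
  assumes "is_mgu_list \<theta> ss ts"
    and "map (subst_trm \<theta>') (map (subst_trm \<sigma>) ss) = map (subst_trm \<theta>') (map (subst_trm \<sigma>) ts)"
  shows "\<exists>\<eta>. comp_s \<theta>' \<sigma> = comp_s \<eta> \<theta>"
proof -
  have "map (subst_trm (comp_s \<theta>' \<sigma>)) ss = map (subst_trm (comp_s \<theta>' \<sigma>)) ts"
    using assms(2) by (simp only: map_subst_comp)
  then obtain \<eta> where "\<forall>x. comp_s \<theta>' \<sigma> x = subst_trm \<eta> (\<theta> x)"
    using assms(1) unfolding is_mgu_list_def by blast
  then have "comp_s \<theta>' \<sigma> = comp_s \<eta> \<theta>" by (simp add: fun_eq_iff comp_s_def)
  then show ?thesis by blast
qed

lemma clause_step_D: "clause_step C g h \<Longrightarrow> g \<noteq> [] \<and> \<not> basic_atm (hd g)"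
  by (auto simp: clause_step_def)

lemma basic_step_D: "basic_step g h \<Longrightarrow> g \<noteq> [] \<and> basic_atm (hd g)"
  by (auto simp: basic_step_def)

lemma inst_basic:
  assumes "basic_step g h" "basic_step (subst_goal \<tau> g) h'"
  shows "\<exists>\<eta>. h' = subst_goal \<eta> h"
  using assms(1) unfolding basic_step_def
proof (elim disjE exE conjE)
  fix t1 t2 G \<theta> assume g: "g = Eq t1 t2 # G" and th: "is_mgu_list \<theta> [t1] [t2]" and h: "h = subst_goal \<theta> G"
  have sg: "subst_goal \<tau> g = Eq (subst_trm \<tau> t1) (subst_trm \<tau> t2) # subst_goal \<tau> G" using g by simp
  from assms(2)[unfolded basic_step_def sg] obtain \<theta>' where
    th': "is_mgu_list \<theta>' [subst_trm \<tau> t1] [subst_trm \<tau> t2]" and h': "h' = subst_goal \<theta>' (subst_goal \<tau> G)"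
    by auto
  have "map (subst_trm \<theta>') (map (subst_trm \<tau>) [t1]) = map (subst_trm \<theta>') (map (subst_trm \<tau>) [t2])"
    using th' unfolding is_mgu_list_def by simp
  then obtain \<eta> where e: "comp_s \<theta>' \<tau> = comp_s \<eta> \<theta>" using mgu_factor[OF th] by blast
  have "h' = subst_goal (comp_s \<theta>' \<tau>) G" using h' by (simp add: subst_goal_comp)
  also have "\<dots> = subst_goal \<eta> h" using e h by (simp add: subst_goal_comp)
  finally show ?thesis by blast
next
  fix t1 t2 assume g: "g = Neq t1 t2 # h"
  have sg: "subst_goal \<tau> g = Neq (subst_trm \<tau> t1) (subst_trm \<tau> t2) # subst_goal \<tau> h" using g by simp
  from assms(2)[unfolded basic_step_def sg] have "h' = subst_goal \<tau> h" by auto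
  then show ?thesis by blast
qed

lemma bij_inv_f_f: "bij \<pi> \<Longrightarrow> inv \<pi> (\<pi> x) = x"
  by (simp add: bij_is_inj)

lemma inst_clause:
  assumes "clause_step C g h" "clause_step C (subst_goal \<tau> g) h'"
  shows "\<exists>\<eta>. h' = subst_goal \<eta> h"
proof -
  from assms(1) obtain A G C1 \<theta>1 where g: "g = A # G" and nb: "\<not> basic_atm A" and v1: "variant_cl C1 C"
    and ap1: "vars_cl C1 \<inter> vars_goal g = {}" and m1: "is_mgu_atm \<theta>1 A (cl_head C1)"
    and h: "h = subst_goal \<theta>1 (cl_body C1 @ G)"
    unfolding clause_step_def by blast
  have sg: "subst_goal \<tau> g = subst_atm \<tau> A # subst_goal \<tau> G" using g by simp
  from assms(2) obtain C2 \<theta>2 where v2: "variant_cl C2 C"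
    and m2: "is_mgu_atm \<theta>2 (subst_atm \<tau> A) (cl_head C2)"
    and h': "h' = subst_goal \<theta>2 (cl_body C2 @ subst_goal \<tau> G)"
    unfolding clause_step_def sg by auto
  from v1 obtain \<pi>1 where \<pi>1: "bij \<pi>1" "C1 = subst_cl (\<lambda>x. Var (\<pi>1 x)) C" unfolding variant_cl_def by blast
  from v2 obtain \<pi>2 where \<pi>2: "bij \<pi>2" "C2 = subst_cl (\<lambda>x. Var (\<pi>2 x)) C" unfolding variant_cl_def by blast
  define \<sigma> where "\<sigma> x = (if x \<in> vars_cl C1 then Var (\<pi>2 (inv \<pi>1 x)) else \<tau> x)" for x
  have sC: "subst_cl \<sigma> C1 = C2"
  proof -
    have "subst_cl \<sigma> C1 = subst_cl (\<lambda>x. Var (\<pi>2 (inv \<pi>1 x))) C1"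
      by (rule subst_cl_cong) (simp add: \<sigma>_def)
    also have "\<dots> = subst_cl (comp_s (\<lambda>x. Var (\<pi>2 (inv \<pi>1 x))) (\<lambda>x. Var (\<pi>1 x))) C"
      using \<pi>1(2) by (simp add: subst_cl_comp)
    also have "\<dots> = subst_cl (\<lambda>x. Var (\<pi>2 x)) C"
      by (rule subst_cl_cong) (simp add: comp_s_def bij_inv_f_f[OF \<pi>1(1)])
    finally show ?thesis using \<pi>2(2) by simp
  qed
  have sA: "subst_atm \<sigma> A = subst_atm \<tau> A"
    by (rule subst_atm_cong) (use ap1 g in \<open>auto simp: \<sigma>_def\<close>)
  have sG: "subst_goal \<sigma> G = subst_goal \<tau> G"
    by (rule subst_goal_cong) (use ap1 g in \<open>auto simp: \<sigma>_def\<close>)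
  obtain p ts where A: "A = Pred p ts" using nb by (cases A) auto
  obtain q us where H: "cl_head C1 = Pred q us" by (cases C1) auto
  have mm1: "is_mgu_list \<theta>1 ts us" using m1 A H by simp
  have H2: "cl_head C2 = Pred q (map (subst_trm \<sigma>) us)" using sC H by (metis cl_head_subst subst_atm.simps(3))
  have A2: "subst_atm \<tau> A = Pred p (map (subst_trm \<sigma>) ts)" using sA A by simp
  have "map (subst_trm \<theta>2) (map (subst_trm \<sigma>) ts) = map (subst_trm \<theta>2) (map (subst_trm \<sigma>) us)"
    using m2 unfolding H2 A2 by (simp add: is_mgu_list_def)
  then obtain \<eta> where e: "comp_s \<theta>2 \<sigma> = comp_s \<eta> \<theta>1" using mgu_factor[OF mm1] by blast
  have "h' = subst_goal \<theta>2 (subst_goal \<sigma> (cl_body C1 @ G))"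
    using h' sG sC by (metis cl_body_subst subst_goal_simps(3))
  also have "\<dots> = subst_goal \<eta> h" using e h by (simp add: subst_goal_comp)
  finally show ?thesis by blast
qed



lemma step_basic_hd: "step P g h \<Longrightarrow> g \<noteq> [] \<Longrightarrow> basic_atm (hd g) \<Longrightarrow> basic_step g h"
  unfolding step_def using clause_step_D by blast

lemma hd_subst_goal: "g \<noteq> [] \<Longrightarrow> hd (subst_goal \<tau> g) = subst_atm \<tau> (hd g)"
  by (cases g) auto

lemma subst_goal_nil_iff[simp]: "subst_goal \<tau> g = [] \<longleftrightarrow> g = []"
  by (simp add: subst_goal_def)

lemma same_clause:
  assumes d1: "derives_C P C g g1" and d2: "derives_C P C g g2"
    and e1: "g1 \<noteq> []" "\<not> basic_atm (hd g1)" and e2: "g2 \<noteq> []" "\<not> basic_atm (hd g2)"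
  shows "variant_goal g2 g1"
proof -
  from d1 obtain n f where f: "n > 0" "f 0 = g" "f n = g1" "\<forall>i<n. step P (f i) (f (Suc i))"
    "clause_step C (f 0) (f 1)" "\<forall>i. 0 < i \<and> i < n \<longrightarrow> f i \<noteq> [] \<and> basic_atm (hd (f i))"
    unfolding derives_C_def by blast
  from d2 obtain n' f' where f': "n' > 0" "f' 0 = g" "f' n' = g2" "\<forall>i<n'. step P (f' i) (f' (Suc i))"
    "clause_step C (f' 0) (f' 1)" "\<forall>i. 0 < i \<and> i < n' \<longrightarrow> f' i \<noteq> [] \<and> basic_atm (hd (f' i))"
    unfolding derives_C_def by blast
  have inv: "i \<le> n \<and> i \<le> n' \<longrightarrow> (\<exists>\<tau>. f' i = subst_goal \<tau> (f i)) \<and> (\<exists>\<tau>. f i = subst_goal \<tau> (f' i))" for i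
  proof (induction i)
    case 0
    have "f' 0 = subst_goal Var (f 0)" "f 0 = subst_goal Var (f' 0)" using f(2) f'(2) by simp_all
    then show ?case by blast
  next
    case (Suc i)
    show ?case
    proof
      assume le: "Suc i \<le> n \<and> Suc i \<le> n'"
      show "(\<exists>\<tau>. f' (Suc i) = subst_goal \<tau> (f (Suc i))) \<and> (\<exists>\<tau>. f (Suc i) = subst_goal \<tau> (f' (Suc i)))"
      proof (cases "i = 0")
        case True
        have g0: "f' 0 = subst_goal Var (f 0)" "f 0 = subst_goal Var (f' 0)" using f(2) f'(2) by simp_all
        have c1: "clause_step C (f 0) (f (Suc i))" "clause_step C (f' 0) (f' (Suc i))" using f(5) f'(5) True by simp_all
        have c1': "clause_step C (subst_goal Var (f' 0)) (f (Suc i))" using c1(1) g0(2) by simp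
        have c2': "clause_step C (subst_goal Var (f 0)) (f' (Suc i))" using c1(2) g0(1) by simp
        show ?thesis using inst_clause[OF c1(1) c2'] inst_clause[OF c1(2) c1'] by (intro conjI)
      next
        case False
        then have ip: "0 < i" "i < n" "i < n'" using le by auto
        have "i \<le> n \<and> i \<le> n'" using ip by simp
        then have "(\<exists>\<tau>. f' i = subst_goal \<tau> (f i)) \<and> (\<exists>\<tau>. f i = subst_goal \<tau> (f' i))" using Suc.IH by blast
        then obtain \<tau> \<tau>' where t: "f' i = subst_goal \<tau> (f i)" "f i = subst_goal \<tau>' (f' i)" by blast
        have s1: "step P (f i) (f (Suc i))" using f(4) ip(2) by blast
        have s2: "step P (f' i) (f' (Suc i))" using f'(4) ip(3) by blast
        have h1: "f i \<noteq> [] \<and> basic_atm (hd (f i))" using f(6) ip(1) ip(2) by blast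
        have h2: "f' i \<noteq> [] \<and> basic_atm (hd (f' i))" using f'(6) ip(1) ip(3) by blast
        have b1: "basic_step (f i) (f (Suc i))" using step_basic_hd[OF s1] h1 by blast
        have b2: "basic_step (f' i) (f' (Suc i))" using step_basic_hd[OF s2] h2 by blast
        have b1': "basic_step (subst_goal \<tau>' (f' i)) (f (Suc i))" using b1 t(2) by simp
        have b2': "basic_step (subst_goal \<tau> (f i)) (f' (Suc i))" using b2 t(1) by simp
        show ?thesis using inst_basic[OF b1 b2'] inst_basic[OF b2 b1'] by (intro conjI)
      qed
    qed
  qed
  have nn: "n = n'"
  proof (rule ccontr)
    assume "n \<noteq> n'"
    then consider "n < n'" | "n' < n" by linarith
    then show False
    proof cases
      case 1
      have "n \<le> n \<and> n \<le> n'" using 1 by simp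
      then have "\<exists>\<tau>. f' n = subst_goal \<tau> (f n)" using inv by blast
      then obtain \<tau> where t: "f' n = subst_goal \<tau> (f n)" by blast
      have h1: "f' n \<noteq> [] \<and> basic_atm (hd (f' n))" using f'(6) f(1) 1 by blast
      have "hd (f' n) = subst_atm \<tau> (hd g1)" using t f(3) hd_subst_goal[OF e1(1)] by simp
      then have "basic_atm (hd g1)" using h1 by simp
      then show False using e1(2) by simp
    next
      case 2
      have "n' \<le> n \<and> n' \<le> n'" using 2 by simp
      then have "\<exists>\<tau>. f n' = subst_goal \<tau> (f' n')" using inv by blast
      then obtain \<tau> where t: "f n' = subst_goal \<tau> (f' n')" by blast
      have h1: "f n' \<noteq> [] \<and> basic_atm (hd (f n'))" using f(6) f'(1) 2 by blast
      have "hd (f n') = subst_atm \<tau> (hd g2)" using t f'(3) hd_subst_goal[OF e2(1)] by simp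
      then have "basic_atm (hd g2)" using h1 by simp
      then show False using e2(2) by simp
    qed
  qed
  have "n \<le> n \<and> n \<le> n'" using nn by simp
  then have "(\<exists>\<tau>. f' n = subst_goal \<tau> (f n)) \<and> (\<exists>\<tau>. f n = subst_goal \<tau> (f' n))" using inv by blast
  then obtain \<tau> \<tau>' where "f' n = subst_goal \<tau> (f n)" "f n = subst_goal \<tau>' (f' n)" by blast
  then have "g2 = subst_goal \<tau> g1" "g1 = subst_goal \<tau>' g2" using f(3) f'(3) nn by simp_all
  then show ?thesis by (rule mutual_inst_variant)
qed

lemma basic_goal_subst[simp]: "basic_goal (subst_goal \<sigma> G) = basic_goal G"
  by (auto simp: basic_goal_def subst_goal_def)

lemma basic_goal_app[simp]: "basic_goal (G @ H) = (basic_goal G \<and> basic_goal H)"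
  by (auto simp: basic_goal_def)

lemma basic_step_basic: "basic_step g h \<Longrightarrow> basic_goal g \<Longrightarrow> basic_goal h"
  unfolding basic_step_def by (auto simp: basic_goal_def subst_goal_def)

lemma unit_derive:
  assumes d: "derives_C P C (A0 # G0) g'" and u: "unit_clause C" and b: "basic_goal G0"
  shows "basic_goal g'"
proof -
  from d obtain n f where f: "n > 0" "f 0 = A0 # G0" "f n = g'" "\<forall>i<n. step P (f i) (f (Suc i))"
    "clause_step C (f 0) (f 1)"
    unfolding derives_C_def by blast
  have "1 \<le> i \<and> i \<le> n \<longrightarrow> basic_goal (f i)" for i
  proof (induction i)
    case 0 then show ?case by simp
  next
    case (Suc i)
    show ?case
    proof
      assume le: "1 \<le> Suc i \<and> Suc i \<le> n"
      show "basic_goal (f (Suc i))"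
      proof (cases "i = 0")
        case True
        from f(5) obtain A G C1 \<theta> where "f 0 = A # G" "variant_cl C1 C" "f 1 = subst_goal \<theta> (cl_body C1 @ G)"
          unfolding clause_step_def by blast
        moreover then obtain \<pi> where "C1 = subst_cl (\<lambda>x. Var (\<pi> x)) C" unfolding variant_cl_def by blast
        ultimately show ?thesis using True f(2) u b by (simp add: unit_clause_def)
      next
        case False
        then have bi: "basic_goal (f i)" using Suc.IH le by simp
        have "i < n" using le by simp
        then have st: "step P (f i) (f (Suc i))" using f(4) by blast
        have "basic_step (f i) (f (Suc i))"
        proof (cases "f i")
          case Nil then show ?thesis using st unfolding step_def using clause_step_D basic_step_D by blast
        next
          case (Cons a r) then have "basic_atm (hd (f i))" using bi by (simp add: basic_goal_def)
          moreover have "f i \<noteq> []" using Cons by simp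
          ultimately show ?thesis using step_basic_hd[OF st] by blast
        qed
        then show ?thesis using basic_step_basic bi by blast
      qed
    qed
  qed
  then show ?thesis using f(1) f(3) by (metis One_nat_def Suc_leI order_refl)
qed

lemma guard_derive:
  assumes d: "derives_C P C (A0 # G0) g'" and e: "g' \<noteq> []" "\<not> basic_atm (hd g')"
  shows "\<exists>C1 \<theta>. variant_cl C1 C \<and> vars_cl C1 \<inter> vars_goal (A0 # G0) = {} \<and> is_mgu_atm \<theta> A0 (cl_head C1)
     \<and> (\<forall>j < length (guard C1). \<forall>a b. guard C1 ! j = Neq a b \<longrightarrow> \<not> unifiable_list [subst_trm \<theta> a] [subst_trm \<theta> b])"
proof -
  from d obtain n f where f: "n > 0" "f 0 = A0 # G0" "f n = g'" "\<forall>i<n. step P (f i) (f (Suc i))"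
    "clause_step C (f 0) (f 1)"
    unfolding derives_C_def by blast
  from f(5) obtain A G C1 \<theta> where c: "f 0 = A # G" "variant_cl C1 C" "vars_cl C1 \<inter> vars_goal (f 0) = {}"
     "is_mgu_atm \<theta> A (cl_head C1)" "f 1 = subst_goal \<theta> (cl_body C1 @ G)"
    unfolding clause_step_def by blast
  have AG: "A = A0" "G = G0" using c(1) f(2) by auto
  let ?B = "cl_body C1"
  have lg: "length (guard C1) \<le> length ?B" by (simp add: guard_def length_takeWhile_le)
  have claim: "j \<le> length (guard C1) \<longrightarrow> Suc j \<le> n \<and> f (Suc j) = subst_goal \<theta> (drop j ?B @ G0)
     \<and> (\<forall>k<j. \<forall>a b. guard C1 ! k = Neq a b \<longrightarrow> \<not> unifiable_list [subst_trm \<theta> a] [subst_trm \<theta> b])" for j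
  proof (induction j)
    case 0
    have "f (Suc 0) = subst_goal \<theta> (drop 0 ?B @ G0)" using c(5) AG(2) by simp
    then show ?case using f(1) by simp
  next
    case (Suc j)
    show ?case
    proof
      assume jl: "Suc j \<le> length (guard C1)"
      then have IH: "Suc j \<le> n" "f (Suc j) = subst_goal \<theta> (drop j ?B @ G0)"
        "\<forall>k<j. \<forall>a b. guard C1 ! k = Neq a b \<longrightarrow> \<not> unifiable_list [subst_trm \<theta> a] [subst_trm \<theta> b]"
        using Suc.IH jl by simp_all
      have jB: "j < length ?B" using jl lg by simp
      have gj: "guard C1 ! j = ?B ! j" using jl unfolding guard_def by (simp add: takeWhile_nth)
      have "guard C1 ! j \<in> set (guard C1)" using jl by (rule nth_mem[OF less_eq_Suc_le[THEN iffD2]])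
      then have "is_neq (guard C1 ! j)" unfolding guard_def by (rule set_takeWhileD[THEN conjunct2])
      then have isn: "is_neq (?B ! j)" by (simp only: gj)
      obtain a b where ab: "?B ! j = Neq a b"
      proof (cases "?B ! j")
        case (Neq x y) then show ?thesis using that by blast
      qed (use isn in simp_all)
      have dr: "drop j ?B = Neq a b # drop (Suc j) ?B" using Cons_nth_drop_Suc[OF jB] ab by simp
      have fj: "f (Suc j) = Neq (subst_trm \<theta> a) (subst_trm \<theta> b) # subst_goal \<theta> (drop (Suc j) ?B @ G0)"
        using IH(2) dr by simp
      have "Suc j \<noteq> n"
      proof
        assume "Suc j = n"
        then have "hd g' = Neq (subst_trm \<theta> a) (subst_trm \<theta> b)" using fj f(3) by (simp only:) simp
        then show False using e(2) by simp
      qed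
      then have "Suc j < n" using IH(1) by simp
      then have "step P (f (Suc j)) (f (Suc (Suc j)))" using f(4) by blast
      moreover have "f (Suc j) \<noteq> []" "basic_atm (hd (f (Suc j)))" using fj by simp_all
      ultimately have "basic_step (f (Suc j)) (f (Suc (Suc j)))" using step_basic_hd by blast
      then have "\<not> unifiable_list [subst_trm \<theta> a] [subst_trm \<theta> b] \<and> f (Suc (Suc j)) = subst_goal \<theta> (drop (Suc j) ?B @ G0)"
        unfolding basic_step_def fj by simp
      then have nu: "\<not> unifiable_list [subst_trm \<theta> a] [subst_trm \<theta> b]"
        and fs: "f (Suc (Suc j)) = subst_goal \<theta> (drop (Suc j) ?B @ G0)" by blast+
      have "\<forall>k<Suc j. \<forall>a b. guard C1 ! k = Neq a b \<longrightarrow> \<not> unifiable_list [subst_trm \<theta> a] [subst_trm \<theta> b]"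
      proof (intro allI impI)
        fix k a' b' assume k: "k < Suc j" "guard C1 ! k = Neq a' b'"
        show "\<not> unifiable_list [subst_trm \<theta> a'] [subst_trm \<theta> b']"
        proof (cases "k = j")
          case True then show ?thesis using k(2) gj ab nu by simp
        next
          case False then have "k < j" using k(1) by simp
          then show ?thesis using k(2) IH(3) by blast
        qed
      qed
      then show "Suc (Suc j) \<le> n \<and> f (Suc (Suc j)) = subst_goal \<theta> (drop (Suc j) ?B @ G0)
        \<and> (\<forall>k<Suc j. \<forall>a b. guard C1 ! k = Neq a b \<longrightarrow> \<not> unifiable_list [subst_trm \<theta> a] [subst_trm \<theta> b])"
        using \<open>Suc j < n\<close> fs by simp
    qed
  qed
  have "\<forall>k<length (guard C1). \<forall>a b. guard C1 ! k = Neq a b \<longrightarrow> \<not> unifiable_list [subst_trm \<theta> a] [subst_trm \<theta> b]"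
    using claim[of "length (guard C1)"] by blast
  moreover have "vars_cl C1 \<inter> vars_goal (A0 # G0) = {}" using c(3) f(2) by simp
  moreover have "is_mgu_atm \<theta> A0 (cl_head C1)" using c(4) AG by simp
  ultimately show ?thesis using c(2) by blast
qed



lemma fresh_perm:
  assumes "finite S" "finite T" "infinite (UNIV :: 'a set)"
  shows "\<exists>\<kappa> :: 'a \<Rightarrow> 'a. bij \<kappa> \<and> \<kappa> ` S \<inter> T = {}"
proof -
  have "infinite (UNIV - T)" using Diff_infinite_finite assms(2,3) by blast
  then obtain U where U: "finite U" "card U = card S" "U \<subseteq> UNIV - T"
    using infinite_arbitrarily_large by blast
  then obtain h where h: "bij_betw h S U" using finite_same_card_bij assms(1) by metis
  then have "inj_on h S" by (rule bij_betw_imp_inj_on)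
  then obtain \<kappa> where k: "bij \<kappa>" "\<forall>x\<in>S. \<kappa> x = h x" using ext_perm assms(1) by blast
  have "\<kappa> ` S = h ` S" using k(2) by (auto intro!: image_cong)
  also have "\<dots> = U" using h by (rule bij_betw_imp_surj_on)
  finally have "\<kappa> ` S \<inter> T = {}" using U(3) by blast
  then show ?thesis using k(1) by blast
qed

lemma vars_rename_trm: "vars_trm (subst_trm (\<lambda>x. Var (\<pi> x)) t) = \<pi> ` vars_trm t"
  by (auto simp: vars_subst_trm)
lemma vars_rename_trms: "vars_trms (map (subst_trm (\<lambda>x. Var (\<pi> x))) ts) = \<pi> ` vars_trms ts"
  by (auto simp: vars_trms_map)
lemma vars_rename_cl: "vars_cl (subst_cl (\<lambda>x. Var (\<pi> x)) C) = \<pi> ` vars_cl C"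
  by (auto simp: vars_cl_subst)

lemma input_args_subset: "set (input_args M p ts) \<subseteq> set ts"
  unfolding input_args_def by (auto dest: set_zip_rightD)

lemma vars_input_args: "vars_trms (input_args M p ts) \<subseteq> vars_trms ts"
  using input_args_subset[of M p ts] unfolding vars_trms_def by blast

lemma guard_subset: "set (guard C) \<subseteq> set (cl_body C)"
  unfolding guard_def by (auto dest: set_takeWhileD)

lemma guard_rename: "guard (subst_cl \<sigma> C) = subst_goal \<sigma> (guard C)"
  by (simp add: guard_def subst_goal_def takeWhile_map o_def)

definition safe_weak :: "'p mode \<Rightarrow> ('p,'f,'v) clause \<Rightarrow> bool" where
  "safe_weak M C \<longleftrightarrow> (\<forall>j<length (guard C). \<forall>a b. guard C ! j = Neq a b \<longrightarrow>
      (\<forall>x\<in>vars_trm a \<union> vars_trm b. x \<in> head_input_vars M C \<or> x \<notin> vars_atm (cl_head C)))"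

lemma safe_weak_rename:
  assumes s: "safe_clause M C" and b: "bij \<pi>"
  shows "safe_weak M (subst_cl (\<lambda>x. Var (\<pi> x)) C)"
proof (cases C)
  case (Clause p ts B)
  let ?\<rho> = "\<lambda>x. Var (\<pi> x)"
  let ?C1 = "subst_cl ?\<rho> C"
  have inj: "inj \<pi>" using b bij_is_inj by blast
  have g1: "guard ?C1 = subst_goal ?\<rho> (guard C)" by (rule guard_rename)
  have gB: "guard C = takeWhile is_neq B" using Clause by (simp add: guard_def)
  have hiv: "head_input_vars M ?C1 = \<pi> ` vars_trms (input_args M p ts)"
    using Clause by (simp add: input_args_map vars_rename_trms)
  have hv: "vars_atm (cl_head ?C1) = \<pi> ` vars_trms ts"
    using Clause by (simp add: vars_rename_trms)
  show ?thesis unfolding safe_weak_def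
  proof (intro allI impI ballI)
    fix j a b x
    assume j: "j < length (guard ?C1)" and ab: "guard ?C1 ! j = Neq a b" and x: "x \<in> vars_trm a \<union> vars_trm b"
    have jg: "j < length (guard C)" using j g1 by (simp add: subst_goal_def)
    have jB: "j < length B" using jg gB length_takeWhile_le by (metis order.strict_trans2)
    have gj: "guard C ! j = B ! j" using jg gB by (simp add: takeWhile_nth)
    have "guard ?C1 ! j = subst_atm ?\<rho> (guard C ! j)" using jg g1 by (simp add: subst_goal_def)
    then have e: "subst_atm ?\<rho> (B ! j) = Neq a b" using ab gj by simp
    then obtain a0 b0 where ab0: "B ! j = Neq a0 b0" "a = subst_trm ?\<rho> a0" "b = subst_trm ?\<rho> b0"
      by (cases "B ! j") auto
    have "x \<in> \<pi> ` (vars_trm a0 \<union> vars_trm b0)" using x ab0 by (auto simp: vars_rename_trm)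
    then obtain y where y: "x = \<pi> y" "y \<in> vars_trm a0 \<union> vars_trm b0" by blast
    have "cl_body C ! j = Neq a0 b0" "j < length (cl_body C)" using ab0 jB Clause by simp_all
    then have "y \<in> head_input_vars M C \<or> local_var C j y" using s y(2) unfolding safe_clause_def by blast
    then show "x \<in> head_input_vars M ?C1 \<or> x \<notin> vars_atm (cl_head ?C1)"
    proof
      assume "y \<in> head_input_vars M C"
      then have "y \<in> vars_trms (input_args M p ts)" using Clause by simp
      then show ?thesis using hiv y(1) by blast
    next
      assume "local_var C j y"
      then have "y \<notin> vars_trms ts" using Clause by (simp add: local_var_def)
      then have "x \<notin> \<pi> ` vars_trms ts" using y(1) inj by (simp add: inj_image_mem_iff)
      then show ?thesis using hv by simp
    qed
  qed
qed

lemma mgu_relevant: "is_mgu_list \<theta> ss ts \<Longrightarrow> x \<notin> vars_trms ss \<Longrightarrow> x \<notin> vars_trms ts \<Longrightarrow> \<theta> x = Var x"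
  unfolding is_mgu_list_def subst_dom_def by blast

lemma guard_atom_holds:
  assumes nu: "\<not> unifiable_list [subst_trm \<theta> a] [subst_trm \<theta> b]"
    and c: "\<forall>z\<in>vars_trm a \<union> vars_trm b. \<theta> z = Var z \<or> (ground_trm (\<theta> z) \<and> w z = \<theta> z)"
  shows "subst_trm \<tau> (subst_trm w a) \<noteq> subst_trm \<tau> (subst_trm w b)"
proof
  assume eq: "subst_trm \<tau> (subst_trm w a) = subst_trm \<tau> (subst_trm w b)"
  define u where "u z = subst_trm \<tau> (w z)" for z
  have key: "comp_s u \<theta> z = comp_s \<tau> w z" if "z \<in> vars_trm a \<union> vars_trm b" for z
  proof -
    from c that have "\<theta> z = Var z \<or> (ground_trm (\<theta> z) \<and> w z = \<theta> z)" by blast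
    then show ?thesis
    proof
      assume "\<theta> z = Var z" then show ?thesis by (simp add: comp_s_def u_def)
    next
      assume g: "ground_trm (\<theta> z) \<and> w z = \<theta> z"
      then have "comp_s u \<theta> z = \<theta> z" by (simp add: comp_s_def ground_subst)
      also have "\<dots> = comp_s \<tau> w z" using g by (simp add: comp_s_def ground_subst)
      finally show ?thesis .
    qed
  qed
  have "subst_trm u (subst_trm \<theta> a) = subst_trm \<tau> (subst_trm w a)"
    unfolding subst_trm_comp by (rule subst_trm_cong) (use key in blast)
  moreover have "subst_trm u (subst_trm \<theta> b) = subst_trm \<tau> (subst_trm w b)"
    unfolding subst_trm_comp by (rule subst_trm_cong) (use key in blast)
  ultimately have "map (subst_trm u) [subst_trm \<theta> a] = map (subst_trm u) [subst_trm \<theta> b]" using eq by simp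
  then have "unifiable_list [subst_trm \<theta> a] [subst_trm \<theta> b]" unfolding unifiable_list_def by auto
  then show False using nu by blast
qed

lemma ground_from_map:
  assumes "map (subst_trm \<sigma>) ts = gs" "\<forall>t\<in>set gs. ground_trm t" "x \<in> vars_trms ts"
  shows "ground_trm (\<sigma> x)"
proof -
  obtain t where t: "t \<in> set ts" "x \<in> vars_trm t" using assms(3) by (auto simp: vars_trms_def)
  have "subst_trm \<sigma> t \<in> set (map (subst_trm \<sigma>) ts)" using t(1) by simp
  then have "subst_trm \<sigma> t \<in> set gs" by (simp only: assms(1))
  then have "ground_trm (subst_trm \<sigma> t)" using assms(2) by blast
  then show ?thesis using t(2) by (rule ground_subst_var)
qed



lemma mutex_contra:
  fixes C1 C2 :: "('p,'f,'v) clause" and \<kappa> :: "'v \<Rightarrow> 'v"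
  assumes A0: "A0 = Pred p s" and gs: "\<forall>t\<in>set (input_args M p s). ground_trm t"
    and m1: "is_mgu_atm \<theta>1 A0 (cl_head C1)" and ap1: "vars_cl C1 \<inter> vars_atm A0 = {}"
    and n1: "\<forall>j<length (guard C1). \<forall>a b. guard C1 ! j = Neq a b \<longrightarrow> \<not> unifiable_list [subst_trm \<theta>1 a] [subst_trm \<theta>1 b]"
    and sw1: "safe_weak M C1"
    and m2: "is_mgu_atm \<theta>2 A0 (cl_head C2)" and ap2: "vars_cl C2 \<inter> vars_atm A0 = {}"
    and n2: "\<forall>j<length (guard C2). \<forall>a b. guard C2 ! j = Neq a b \<longrightarrow> \<not> unifiable_list [subst_trm \<theta>2 a] [subst_trm \<theta>2 b]"
    and sw2: "safe_weak M C2"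
    and k: "bij \<kappa>" and disj: "vars_cl (subst_cl (\<lambda>x. Var (\<kappa> x)) C2) \<inter> vars_cl C1 = {}"
    and mx: "mutex_apart M C1 (subst_cl (\<lambda>x. Var (\<kappa> x)) C2)"
  shows False
proof -
  obtain p1 ts1 B1 where C1: "C1 = Clause p1 ts1 B1" by (cases C1) auto
  obtain p2 ts2 B2 where C2: "C2 = Clause p2 ts2 B2" by (cases C2) auto
  define \<rho> where "\<rho> = (\<lambda>x. Var (\<kappa> x) :: ('f,'v) trm)"
  have m1': "p1 = p" "is_mgu_list \<theta>1 s ts1" using m1 A0 C1 by simp_all
  have m2': "p2 = p" "is_mgu_list \<theta>2 s ts2" using m2 A0 C2 by simp_all
  have C2': "subst_cl \<rho> C2 = Clause p (map (subst_trm \<rho>) ts2) (subst_goal \<rho> B2)" using C2 m2'(1) by simp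
  define t1 where "t1 = input_args M p ts1"
  define t2'' where "t2'' = input_args M p ts2"
  define t2 where "t2 = input_args M p (map (subst_trm \<rho>) ts2)"
  define gsl where "gsl = input_args M p s"
  have t2e: "t2 = map (subst_trm \<rho>) t2''" unfolding t2_def t2''_def by (rule input_args_map)
  have len: "length s = length ts1" "length s = length ts2" using m1'(2) m2'(2) by (simp_all add: is_mgu_list_def)
  have gsl_g: "\<forall>t\<in>set gsl. ground_trm t" using gs gsl_def by simp
  have gfix: "map (subst_trm \<theta>) gsl = gsl" for \<theta>
  proof -
    have "map (subst_trm \<theta>) gsl = map id gsl" using gsl_g by (intro map_cong) (auto simp: ground_subst)
    then show ?thesis by simp
  qed
  have e1: "map (subst_trm \<theta>1) t1 = gsl"
  proof -
    have "map (subst_trm \<theta>1) t1 = input_args M p (map (subst_trm \<theta>1) ts1)" unfolding t1_def by (rule input_args_map[symmetric])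
    also have "\<dots> = input_args M p (map (subst_trm \<theta>1) s)" using m1'(2) by (simp add: is_mgu_list_def)
    also have "\<dots> = map (subst_trm \<theta>1) gsl" unfolding gsl_def by (rule input_args_map)
    finally show ?thesis using gfix by simp
  qed
  have e2: "map (subst_trm \<theta>2) t2'' = gsl"
  proof -
    have "map (subst_trm \<theta>2) t2'' = input_args M p (map (subst_trm \<theta>2) ts2)" unfolding t2''_def by (rule input_args_map[symmetric])
    also have "\<dots> = input_args M p (map (subst_trm \<theta>2) s)" using m2'(2) by (simp add: is_mgu_list_def)
    also have "\<dots> = map (subst_trm \<theta>2) gsl" unfolding gsl_def by (rule input_args_map)
    finally show ?thesis using gfix by simp
  qed
  have vt1: "vars_trms t1 \<subseteq> vars_cl C1"
    using vars_input_args[of M p ts1] C1 unfolding t1_def by (auto simp: vars_cl_def)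
  have vt2: "vars_trms t2 \<subseteq> vars_cl (subst_cl \<rho> C2)"
    using vars_input_args[of M p "map (subst_trm \<rho>) ts2"] C2' unfolding t2_def by (auto simp: vars_cl_def)
  have disj': "vars_cl (subst_cl \<rho> C2) \<inter> vars_cl C1 = {}" using disj unfolding \<rho>_def .
  have vt12: "vars_trms t1 \<inter> vars_trms t2 = {}" using vt1 vt2 disj' by blast
  have vt2e: "vars_trms t2 = \<kappa> ` vars_trms t2''" unfolding t2e \<rho>_def by (rule vars_rename_trms)
  define \<sigma> where "\<sigma> x = (if x \<in> vars_trms t1 then \<theta>1 x else if x \<in> vars_trms t2 then \<theta>2 (inv \<kappa> x) else Var x)" for x
  have \<sigma>1: "\<sigma> x = \<theta>1 x" if "x \<in> vars_trms t1" for x using that by (simp add: \<sigma>_def)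
  have \<sigma>2: "\<sigma> (\<kappa> z) = \<theta>2 z" if "z \<in> vars_trms t2''" for z
  proof -
    have "\<kappa> z \<in> vars_trms t2" using vt2e that by blast
    moreover then have "\<kappa> z \<notin> vars_trms t1" using vt12 by blast
    ultimately show ?thesis using bij_inv_f_f[OF k] by (simp add: \<sigma>_def)
  qed
  have ea: "map (subst_trm \<sigma>) t1 = gsl"
  proof -
    have "map (subst_trm \<sigma>) t1 = map (subst_trm \<theta>1) t1"
    proof (rule map_cong[OF refl], rule subst_trm_cong)
      fix t x assume "t \<in> set t1" "x \<in> vars_trm t"
      then have "x \<in> vars_trms t1" by (auto simp: vars_trms_def)
      then show "\<sigma> x = \<theta>1 x" by (rule \<sigma>1)
    qed
    then show ?thesis using e1 by simp
  qed
  have eb: "map (subst_trm \<sigma>) t2 = gsl"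
  proof -
    have "map (subst_trm \<sigma>) t2 = map (subst_trm (comp_s \<sigma> \<rho>)) t2''" unfolding t2e by (simp add: subst_trm_comp)
    also have "\<dots> = map (subst_trm \<theta>2) t2''"
    proof (rule map_cong[OF refl], rule subst_trm_cong)
      fix t x assume "t \<in> set t2''" "x \<in> vars_trm t"
      then have "x \<in> vars_trms t2''" by (auto simp: vars_trms_def)
      then show "comp_s \<sigma> \<rho> x = \<theta>2 x" using \<sigma>2 by (simp add: comp_s_def \<rho>_def)
    qed
    finally show ?thesis using e2 by simp
  qed
  have unif: "unifiable_list t1 t2"
  proof -
    have "length t1 = length t2" using ea eb by (metis length_map)
    moreover have "map (subst_trm \<sigma>) t1 = map (subst_trm \<sigma>) t2" using ea eb by simp
    ultimately show ?thesis unfolding unifiable_list_def by blast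
  qed
  let ?D = "guard C1 @ guard (subst_cl \<rho> C2)"
  let ?V = "vars_trms t1 \<union> vars_trms t2"
  have C1p: "C1 = Clause p ts1 B1" using C1 m1'(1) by simp
  have mx'': "mutex_apart M (Clause p ts1 B1) (Clause p (map (subst_trm \<rho>) ts2) (subst_goal \<rho> B2))"
    using mx unfolding \<rho>_def[symmetric] C1p[symmetric] C2'[symmetric] .
  have lq: "(p, length ts1) = (p, length (map (subst_trm \<rho>) ts2))" using len by simp
  have "\<not> unifiable_list t1 t2 \<or> (\<exists>\<theta>. is_mgu_list \<theta> t1 t2 \<and> \<not> satisfiable_wrt (subst_goal \<theta>
      (guard (Clause p ts1 B1) @ guard (Clause p (map (subst_trm \<rho>) ts2) (subst_goal \<rho> B2)))) ?V)"
    using mx'' lq unfolding mutex_apart.simps Let_def t1_def t2_def by blast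
  then have "\<not> unifiable_list t1 t2 \<or> (\<exists>\<theta>. is_mgu_list \<theta> t1 t2 \<and> \<not> satisfiable_wrt (subst_goal \<theta> ?D) ?V)"
    unfolding C1p C2' .
  then obtain \<theta> where th: "is_mgu_list \<theta> t1 t2" and nsat: "\<not> satisfiable_wrt (subst_goal \<theta> ?D) ?V"
    using unif by blast
  have "map (subst_trm \<sigma>) t1 = map (subst_trm \<sigma>) t2" using ea eb by simp
  then obtain \<eta> where eta: "\<forall>x. \<sigma> x = subst_trm \<eta> (\<theta> x)" using th unfolding is_mgu_list_def by blast
  have idem: "\<forall>x. subst_trm \<theta> (\<theta> x) = \<theta> x" using th unfolding is_mgu_list_def by blast
  have cst: "comp_s \<sigma> \<theta> = \<sigma>"
  proof
    fix x
    have "comp_s \<sigma> \<theta> x = subst_trm \<sigma> (\<theta> x)" by (simp add: comp_s_def)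
    also have "\<dots> = subst_trm (comp_s \<eta> \<theta>) (\<theta> x)"
      by (rule subst_trm_cong) (simp add: comp_s_def eta)
    also have "\<dots> = subst_trm \<eta> (subst_trm \<theta> (\<theta> x))" by (simp add: subst_trm_comp)
    also have "\<dots> = subst_trm \<eta> (\<theta> x)" using idem by simp
    also have "\<dots> = \<sigma> x" using eta by simp
    finally show "comp_s \<sigma> \<theta> x = \<sigma> x" .
  qed
  have sth: "subst_goal \<sigma> (subst_goal \<theta> ?D) = subst_goal \<sigma> ?D" by (simp add: subst_goal_comp cst)
  have va1: "vars_atm A0 = vars_trms s" using A0 by simp
  have hold: "holds_atm (subst_atm \<tau> (subst_atm \<sigma> A))" if A: "A \<in> set ?D" for \<tau> A
  proof -
    from A consider "A \<in> set (guard C1)" | "A \<in> set (guard (subst_cl \<rho> C2))" by auto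
    then show ?thesis
    proof cases
      case 1
      then obtain j where j: "j < length (guard C1)" "guard C1 ! j = A" by (auto simp: in_set_conv_nth)
      have "is_neq A" using 1 unfolding guard_def by (auto dest: set_takeWhileD)
      then obtain a b where ab: "A = Neq a b" by (cases A) auto
      have nu: "\<not> unifiable_list [subst_trm \<theta>1 a] [subst_trm \<theta>1 b]" using n1 j ab by blast
      have vb: "vars_trm a \<union> vars_trm b \<subseteq> vars_cl C1"
        using 1 guard_subset[of C1] ab unfolding vars_cl_def vars_goal_def by force
      have c: "\<forall>z\<in>vars_trm a \<union> vars_trm b. \<theta>1 z = Var z \<or> (ground_trm (\<theta>1 z) \<and> \<sigma> z = \<theta>1 z)"
      proof
        fix z assume z: "z \<in> vars_trm a \<union> vars_trm b"
        have "z \<in> head_input_vars M C1 \<or> z \<notin> vars_atm (cl_head C1)" using sw1 j ab z unfolding safe_weak_def by blast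
        then show "\<theta>1 z = Var z \<or> (ground_trm (\<theta>1 z) \<and> \<sigma> z = \<theta>1 z)"
        proof
          assume "z \<in> head_input_vars M C1"
          then have zt: "z \<in> vars_trms t1" using C1 m1'(1) t1_def by simp
          then show ?thesis using ground_from_map[OF e1 gsl_g zt] \<sigma>1[OF zt] by blast
        next
          assume "z \<notin> vars_atm (cl_head C1)"
          then have "z \<notin> vars_trms ts1" using C1 by simp
          moreover have "z \<notin> vars_trms s" using z vb ap1 va1 by blast
          ultimately show ?thesis using mgu_relevant[OF m1'(2)] by blast
        qed
      qed
      show ?thesis using guard_atom_holds[OF nu c, of \<tau>] ab by simp
    next
      case 2
      then have "A \<in> set (subst_goal \<rho> (guard C2))" by (simp only: guard_rename)
      then obtain A2 where A2: "A2 \<in> set (guard C2)" "A = subst_atm \<rho> A2" by (auto simp: subst_goal_def)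
      then obtain j where j: "j < length (guard C2)" "guard C2 ! j = A2" by (auto simp: in_set_conv_nth)
      have "is_neq A2" using A2(1) unfolding guard_def by (auto dest: set_takeWhileD)
      then obtain a b where ab: "A2 = Neq a b" by (cases A2) auto
      have nu: "\<not> unifiable_list [subst_trm \<theta>2 a] [subst_trm \<theta>2 b]" using n2 j ab by blast
      have vb: "vars_trm a \<union> vars_trm b \<subseteq> vars_cl C2"
        using A2(1) guard_subset[of C2] ab unfolding vars_cl_def vars_goal_def by force
      have c: "\<forall>z\<in>vars_trm a \<union> vars_trm b. \<theta>2 z = Var z \<or> (ground_trm (\<theta>2 z) \<and> comp_s \<sigma> \<rho> z = \<theta>2 z)"
      proof
        fix z assume z: "z \<in> vars_trm a \<union> vars_trm b"
        have "z \<in> head_input_vars M C2 \<or> z \<notin> vars_atm (cl_head C2)" using sw2 j ab z unfolding safe_weak_def by blast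
        then show "\<theta>2 z = Var z \<or> (ground_trm (\<theta>2 z) \<and> comp_s \<sigma> \<rho> z = \<theta>2 z)"
        proof
          assume "z \<in> head_input_vars M C2"
          then have zt: "z \<in> vars_trms t2''" using C2 m2'(1) t2''_def by simp
          have "comp_s \<sigma> \<rho> z = \<theta>2 z" using \<sigma>2[OF zt] by (simp add: comp_s_def \<rho>_def)
          then show ?thesis using ground_from_map[OF e2 gsl_g zt] by blast
        next
          assume "z \<notin> vars_atm (cl_head C2)"
          then have "z \<notin> vars_trms ts2" using C2 by simp
          moreover have "z \<notin> vars_trms s" using z vb ap2 va1 by blast
          ultimately show ?thesis using mgu_relevant[OF m2'(2)] by blast
        qed
      qed
      have "subst_trm \<tau> (subst_trm (comp_s \<sigma> \<rho>) a) \<noteq> subst_trm \<tau> (subst_trm (comp_s \<sigma> \<rho>) b)"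
        by (rule guard_atom_holds[OF nu c])
      then show ?thesis using ab A2(2) by (simp add: subst_trm_comp)
    qed
  qed
  have "satisfiable_wrt (subst_goal \<theta> ?D) ?V"
    unfolding satisfiable_wrt_def
  proof (intro exI conjI allI impI ballI)
    fix x assume "x \<in> ?V"
    then consider "x \<in> vars_trms t1" | "x \<in> vars_trms t2" by blast
    then show "ground_trm (\<sigma> x)"
    proof cases
      case 1 then show ?thesis using ground_from_map[OF ea gsl_g] by blast
    next
      case 2 then show ?thesis using ground_from_map[OF eb gsl_g] by blast
    qed
  next
    fix x assume "x \<notin> ?V" then show "\<sigma> x = Var x" by (simp add: \<sigma>_def)
  next
    fix \<tau>
    show "holds_goal (subst_goal \<tau> (subst_goal \<sigma> (subst_goal \<theta> ?D)))"
      unfolding sth unfolding holds_goal_def subst_goal_def using hold by auto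
  qed
  then show False using nsat by blast
qed



theorem lemma16:
  fixes P :: "('p,'f,'v) clause set" and M :: "'p mode"
    and A0 A1 A1' :: "('p,'f,'v) atm" and G0 G1 G1' :: "('p,'f,'v) goal"
  assumes "infinite (UNIV :: 'f set)"
    and "infinite (UNIV :: 'v set)"
    and "mode_for M P"
    and "safe_prog M P"
    and "prog_satisfies M P"
    and "\<forall>C1\<in>P. \<forall>C2\<in>P. C1 \<noteq> C2 \<longrightarrow> \<not> unit_clause C1 \<longrightarrow> \<not> unit_clause C2 \<longrightarrow> mutex M C1 C2"
    and "\<not> basic_atm A0" and "atm_sat M A0" and "basic_goal G0"
    and "\<not> basic_atm A1" and "derives P (A0 # G0) (A1 # G1)"
    and "\<not> basic_atm A1'" and "derives P (A0 # G0) (A1' # G1')"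
  shows "variant_goal (A1' # G1') (A1 # G1)"
proof -
  from assms(11) obtain C1 where C1: "C1 \<in> P" "derives_C P C1 (A0 # G0) (A1 # G1)" unfolding derives_def by blast
  from assms(13) obtain C2 where C2: "C2 \<in> P" "derives_C P C2 (A0 # G0) (A1' # G1')" unfolding derives_def by blast
  have nu1: "\<not> unit_clause C1"
  proof
    assume "unit_clause C1"
    then have "basic_goal (A1 # G1)" using unit_derive[OF C1(2) _ assms(9)] by blast
    then show False using assms(10) by (simp add: basic_goal_def)
  qed
  have nu2: "\<not> unit_clause C2"
  proof
    assume "unit_clause C2"
    then have "basic_goal (A1' # G1')" using unit_derive[OF C2(2) _ assms(9)] by blast
    then show False using assms(12) by (simp add: basic_goal_def)
  qed
  show ?thesis
  proof (cases "C1 = C2")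
    case True
    show ?thesis by (rule same_clause[OF C1(2) C2(2)[folded True]]) (use assms(10,12) in simp_all)
  next
    case False
    have mx: "mutex M C1 C2" using assms(6) C1(1) C2(1) False nu1 nu2 by blast
    from guard_derive[OF C1(2)] assms(10) obtain C1' \<theta>1 where g1: "variant_cl C1' C1"
      "vars_cl C1' \<inter> vars_goal (A0 # G0) = {}" "is_mgu_atm \<theta>1 A0 (cl_head C1')"
      "\<forall>j<length (guard C1'). \<forall>a b. guard C1' ! j = Neq a b \<longrightarrow> \<not> unifiable_list [subst_trm \<theta>1 a] [subst_trm \<theta>1 b]"
      by auto
    from guard_derive[OF C2(2)] assms(12) obtain C2' \<theta>2 where g2: "variant_cl C2' C2"
      "vars_cl C2' \<inter> vars_goal (A0 # G0) = {}" "is_mgu_atm \<theta>2 A0 (cl_head C2')"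
      "\<forall>j<length (guard C2'). \<forall>a b. guard C2' ! j = Neq a b \<longrightarrow> \<not> unifiable_list [subst_trm \<theta>2 a] [subst_trm \<theta>2 b]"
      by auto
    obtain p s where A0: "A0 = Pred p s" using assms(7) by (cases A0) auto
    have gs: "\<forall>t\<in>set (input_args M p s). ground_trm t" using assms(8) A0 by simp
    from g1(1) obtain \<pi>1 where \<pi>1: "bij \<pi>1" "C1' = subst_cl (\<lambda>x. Var (\<pi>1 x)) C1" unfolding variant_cl_def by blast
    from g2(1) obtain \<pi>2 where \<pi>2: "bij \<pi>2" "C2' = subst_cl (\<lambda>x. Var (\<pi>2 x)) C2" unfolding variant_cl_def by blast
    have sw1: "safe_weak M C1'" using safe_weak_rename[OF _ \<pi>1(1)] assms(4) C1(1) \<pi>1(2) unfolding safe_prog_def by blast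
    have sw2: "safe_weak M C2'" using safe_weak_rename[OF _ \<pi>2(1)] assms(4) C2(1) \<pi>2(2) unfolding safe_prog_def by blast
    obtain \<kappa> :: "'v \<Rightarrow> 'v" where k: "bij \<kappa>" "\<kappa> ` vars_cl C2' \<inter> vars_cl C1' = {}"
      using fresh_perm[OF finite_vars_cl finite_vars_cl assms(2)] by blast
    have disj: "vars_cl (subst_cl (\<lambda>x. Var (\<kappa> x)) C2') \<inter> vars_cl C1' = {}"
      using k(2) by (simp add: vars_rename_cl)
    have "subst_cl (\<lambda>x. Var (\<kappa> x)) C2' = subst_cl (comp_s (\<lambda>x. Var (\<kappa> x)) (\<lambda>x. Var (\<pi>2 x))) C2"
      using \<pi>2(2) by (simp add: subst_cl_comp)
    also have "comp_s (\<lambda>x. Var (\<kappa> x)) (\<lambda>x. Var (\<pi>2 x)) = (\<lambda>x. Var ((\<kappa> \<circ> \<pi>2) x))"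
      by (simp add: fun_eq_iff comp_s_def)
    finally have "subst_cl (\<lambda>x. Var (\<kappa> x)) C2' = subst_cl (\<lambda>x. Var ((\<kappa> \<circ> \<pi>2) x)) C2" .
    moreover have "bij (\<kappa> \<circ> \<pi>2)" using k(1) \<pi>2(1) by (rule bij_comp[rotated])
    ultimately have v2: "variant_cl (subst_cl (\<lambda>x. Var (\<kappa> x)) C2') C2" unfolding variant_cl_def by blast
    have "mutex_apart M C1' (subst_cl (\<lambda>x. Var (\<kappa> x)) C2')"
      using mx g1(1) v2 disj unfolding mutex_def by blast
    moreover have "vars_cl C1' \<inter> vars_atm A0 = {}" using g1(2) by auto
    moreover have "vars_cl C2' \<inter> vars_atm A0 = {}" using g2(2) by auto
    ultimately show ?thesis
      using mutex_contra[OF A0 gs g1(3) _ g1(4) sw1 g2(3) _ g2(4) sw2 k(1) disj] by blast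
  qed
qed

end
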